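(* Let $P$ be a valid path with $m=m_T^P$ toll arcs $\tau_1,\dots,\tau_m$, and define recursively for $k=1,\dots,m$ $$t_k=\min_{0\le i<k<j\le m+1}\Big\{\mathcal{U}_{i,j}-\mathcal{L}_{i,j}-\sum_{l=i+1}^{k-1}t_l\Big\}.$$ Then the toll assignment $T(\tau_k)=t_k$ ($k=1,\dots,m$) is optimal for $P$: it is consistent with $P$, and every toll vector $T'$ consistent with $P$ satisfies $\sum_{k=1}^m T'(\tau_k)\le\sum_{k=1}^m t_k$.
   Context: Setting: $G=(V,A)$ is a directed multigraph with $A=A_T\cup A_U$ partitioned into toll arcs and toll-free arcs, fixed costs $c:A_T\to\mathbf{N}$, $d:A_U\to\mathbf{N}$, and vertices $s,t$ such that there is an $s$–$t$ path using only toll-free arcs. A toll vector $T$ assigns a toll $T(e)\ge0$ to each toll arc; under $T$ a toll arc $e$ costs $c(e)+T(e)$ and a toll-free arc $e$ costs $d(e)$; path length is the sum of arc costs. For an $s$–$t$ path $P$, $\mathcal{N}_T(P)$ is the network with all toll arcs not on $P$ deleted, with costs induced by $T$. A path $P$ from $s$ to $t$ is valid if it contains $m_T^P\ge1$ toll arcs and is a shortest $s$–$t$ path in $\mathcal{N}_0(P)$ (all tolls zero). Write a valid path as $P=(\upsilon_{0,1},\tau_1,\upsilon_{1,2},\dots,\tau_m,\upsilon_{m,m+1})$ with $\tau_i$ the $i$-th toll arc in order of traversal; set $\mathrm{TERM}(\tau_0)=s$, $\mathrm{INIT}(\tau_{m+1})=t$. For $0\le i<j\le m+1$, $\mathcal{U}_{i,j}$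 is the length of a shortest path from $\mathrm{TERM}(\tau_i)$ to $\mathrm{INIT}(\tau_j)$ using only toll-free arcs ($+\infty$ if none), and $\mathcal{L}_{k,l}=\sum_{i=k}^{l-1}\mathcal{U}_{i,i+1}+\sum_{i=k+1}^{l-1}c(\tau_i)$ (empty sums are $0$). A toll vector is consistent with $P$ if $P$ is a shortest $s$–$t$ path in $\mathcal{N}_T(P)$ (only tolls on arcs of $P$ matter). *)

theory Defs
  imports Complex_Main "HOL-Library.Extended_Real"
begin

text \<open>Directed multigraph: arcs of an abstract type 'e, with tail src and head tgt.\<close>

fun walk :: "('e \<Rightarrow> 'v) \<Rightarrow> ('e \<Rightarrow> 'v) \<Rightarrow> 'v \<Rightarrow> 'e list \<Rightarrow> 'v \<Rightarrow> bool" where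
  "walk src tgt u [] v = (u = v)"
| "walk src tgt u (e # es) v = (src e = u \<and> walk src tgt (tgt e) es v)"

definition is_path :: "('e \<Rightarrow> 'v) \<Rightarrow> ('e \<Rightarrow> 'v) \<Rightarrow> 'e set \<Rightarrow> 'v \<Rightarrow> 'e list \<Rightarrow> 'v \<Rightarrow> bool" where
  "is_path src tgt As u P v \<longleftrightarrow> set P \<subseteq> As \<and> walk src tgt u P v \<and> distinct (u # map tgt P)"

definition plen :: "('e \<Rightarrow> real) \<Rightarrow> 'e list \<Rightarrow> real" where
  "plen w P = sum_list (map w P)"

definition shortest :: "('e \<Rightarrow> 'v) \<Rightarrow> ('e \<Rightarrow> 'v) \<Rightarrow> 'e set \<Rightarrow> ('e \<Rightarrow> real) \<Rightarrow> 'v \<Rightarrow> 'e list \<Rightarrow> 'v \<Rightarrow> bool" where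
  "shortest src tgt As w u P v \<longleftrightarrow> is_path src tgt As u P v \<and>
     (\<forall>Q. is_path src tgt As u Q v \<longrightarrow> plen w P \<le> plen w Q)"

definition net_arcs :: "'e set \<Rightarrow> 'e set \<Rightarrow> 'e list \<Rightarrow> 'e set" where
  "net_arcs AT AU P = AU \<union> (AT \<inter> set P)"

definition net_cost :: "'e set \<Rightarrow> ('e \<Rightarrow> nat) \<Rightarrow> ('e \<Rightarrow> nat) \<Rightarrow> ('e \<Rightarrow> real) \<Rightarrow> 'e \<Rightarrow> real" where
  "net_cost AT c d T e = (if e \<in> AT then real (c e) + T e else real (d e))"

definition toll_vector :: "'e set \<Rightarrow> ('e \<Rightarrow> real) \<Rightarrow> bool" where
  "toll_vector AT T \<longleftrightarrow> (\<forall>e\<in>AT. T e \<ge> 0)"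

definition tolls :: "'e set \<Rightarrow> 'e list \<Rightarrow> 'e list" where
  "tolls AT P = filter (\<lambda>e. e \<in> AT) P"

definition num_tolls :: "'e set \<Rightarrow> 'e list \<Rightarrow> nat" where
  "num_tolls AT P = length (tolls AT P)"

text \<open>tau i = i-th toll arc of P (1-based).\<close>
definition tau :: "'e set \<Rightarrow> 'e list \<Rightarrow> nat \<Rightarrow> 'e" where
  "tau AT P i = tolls AT P ! (i - 1)"

definition valid_path :: "('e \<Rightarrow> 'v) \<Rightarrow> ('e \<Rightarrow> 'v) \<Rightarrow> 'e set \<Rightarrow> 'e set \<Rightarrow> ('e \<Rightarrow> nat) \<Rightarrow> ('e \<Rightarrow> nat)
    \<Rightarrow> 'v \<Rightarrow> 'v \<Rightarrow> 'e list \<Rightarrow> bool" where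
  "valid_path src tgt AT AU c d s t P \<longleftrightarrow> num_tolls AT P \<ge> 1 \<and>
     shortest src tgt (net_arcs AT AU P) (net_cost AT c d (\<lambda>_. 0)) s P t"

definition consistent :: "('e \<Rightarrow> 'v) \<Rightarrow> ('e \<Rightarrow> 'v) \<Rightarrow> 'e set \<Rightarrow> 'e set \<Rightarrow> ('e \<Rightarrow> nat) \<Rightarrow> ('e \<Rightarrow> nat)
    \<Rightarrow> 'v \<Rightarrow> 'v \<Rightarrow> 'e list \<Rightarrow> ('e \<Rightarrow> real) \<Rightarrow> bool" where
  "consistent src tgt AT AU c d s t P T \<longleftrightarrow>
     shortest src tgt (net_arcs AT AU P) (net_cost AT c d T) s P t"

definition term_pt :: "('e \<Rightarrow> 'v) \<Rightarrow> 'e set \<Rightarrow> 'v \<Rightarrow> 'e list \<Rightarrow> nat \<Rightarrow> 'v" where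
  "term_pt tgt AT s P i = (if i = 0 then s else tgt (tau AT P i))"

definition init_pt :: "('e \<Rightarrow> 'v) \<Rightarrow> 'e set \<Rightarrow> 'v \<Rightarrow> 'e list \<Rightarrow> nat \<Rightarrow> 'v" where
  "init_pt src AT t P j = (if j = num_tolls AT P + 1 then t else src (tau AT P j))"

text \<open>U_{i,j}: length of a shortest toll-free path (infinity if none).\<close>
definition Ucal :: "('e \<Rightarrow> 'v) \<Rightarrow> ('e \<Rightarrow> 'v) \<Rightarrow> 'e set \<Rightarrow> 'e set \<Rightarrow> ('e \<Rightarrow> nat)
    \<Rightarrow> 'v \<Rightarrow> 'v \<Rightarrow> 'e list \<Rightarrow> nat \<Rightarrow> nat \<Rightarrow> ereal" where
  "Ucal src tgt AT AU d s t P i j =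
     Inf {ereal (plen (\<lambda>e. real (d e)) Q) | Q.
            is_path src tgt AU (term_pt tgt AT s P i) Q (init_pt src AT t P j)}"

definition Lcal :: "('e \<Rightarrow> 'v) \<Rightarrow> ('e \<Rightarrow> 'v) \<Rightarrow> 'e set \<Rightarrow> 'e set \<Rightarrow> ('e \<Rightarrow> nat) \<Rightarrow> ('e \<Rightarrow> nat)
    \<Rightarrow> 'v \<Rightarrow> 'v \<Rightarrow> 'e list \<Rightarrow> nat \<Rightarrow> nat \<Rightarrow> ereal" where
  "Lcal src tgt AT AU c d s t P k l =
     (\<Sum>i\<in>{k..<l}. Ucal src tgt AT AU d s t P i (i + 1))
     + ereal (\<Sum>i\<in>{k+1..<l}. real (c (tau AT P i)))"

primrec tseq :: "(nat \<Rightarrow> nat \<Rightarrow> ereal) \<Rightarrow> (nat \<Rightarrow> nat \<Rightarrow> ereal) \<Rightarrow> nat \<Rightarrow> nat \<Rightarrow> real list" where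
  "tseq U L m 0 = []"
| "tseq U L m (Suc n) =
     (let ts = tseq U L m n; k = Suc n in
      ts @ [real_of_ereal (Min {U i j - L i j - ereal (\<Sum>l\<in>{i+1..<k}. ts ! (l - 1)) | i j.
                                  i < k \<and> k < j \<and> j \<le> m + 1})])"

definition tvals :: "('e \<Rightarrow> 'v) \<Rightarrow> ('e \<Rightarrow> 'v) \<Rightarrow> 'e set \<Rightarrow> 'e set \<Rightarrow> ('e \<Rightarrow> nat) \<Rightarrow> ('e \<Rightarrow> nat)
    \<Rightarrow> 'v \<Rightarrow> 'v \<Rightarrow> 'e list \<Rightarrow> real list" where
  "tvals src tgt AT AU c d s t P =
     tseq (Ucal src tgt AT AU d s t P) (Lcal src tgt AT AU c d s t P) (num_tolls AT P) (num_tolls AT P)"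

definition tk :: "('e \<Rightarrow> 'v) \<Rightarrow> ('e \<Rightarrow> 'v) \<Rightarrow> 'e set \<Rightarrow> 'e set \<Rightarrow> ('e \<Rightarrow> nat) \<Rightarrow> ('e \<Rightarrow> nat)
    \<Rightarrow> 'v \<Rightarrow> 'v \<Rightarrow> 'e list \<Rightarrow> nat \<Rightarrow> real" where
  "tk src tgt AT AU c d s t P k = tvals src tgt AT AU c d s t P ! (k - 1)"

text \<open>The toll assignment T(tau_k) = t_k (other arcs: 0, irrelevant).\<close>
definition opt_toll :: "('e \<Rightarrow> 'v) \<Rightarrow> ('e \<Rightarrow> 'v) \<Rightarrow> 'e set \<Rightarrow> 'e set \<Rightarrow> ('e \<Rightarrow> nat) \<Rightarrow> ('e \<Rightarrow> nat)
    \<Rightarrow> 'v \<Rightarrow> 'v \<Rightarrow> 'e list \<Rightarrow> 'e \<Rightarrow> real" where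
  "opt_toll src tgt AT AU c d s t P e =
     (case map_of (zip (tolls AT P) (tvals src tgt AT AU c d s t P)) e of Some x \<Rightarrow> x | None \<Rightarrow> 0)"

end

theory Submission
  imports Defs
begin


definition vtx :: "('e \<Rightarrow> 'v) \<Rightarrow> 'v \<Rightarrow> 'e list \<Rightarrow> nat \<Rightarrow> 'v" where
  "vtx tgt u P n = (u # map tgt P) ! n"

lemma vtx_0[simp]: "vtx tgt u P 0 = u" by (simp add: vtx_def)
lemma vtx_Suc[simp]: "n < length P \<Longrightarrow> vtx tgt u P (Suc n) = tgt (P ! n)" by (simp add: vtx_def)

lemma walk_append: "walk src tgt u (xs @ ys) v \<longleftrightarrow> (\<exists>w. walk src tgt u xs w \<and> walk src tgt w ys v)"
  by (induction xs arbitrary: u) auto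

lemma walk_end: "walk src tgt u P v \<Longrightarrow> v = vtx tgt u P (length P)"
proof (induction P arbitrary: u)
  case Nil then show ?case by simp
next
  case (Cons e P)
  then have "v = vtx tgt (tgt e) P (length P)" by simp
  then show ?case by (cases P) (auto simp: vtx_def)
qed

lemma vtx_take: "n \<le> length P \<Longrightarrow> vtx tgt u (take n P) n = vtx tgt u P n"
  by (cases n) (auto simp: vtx_def)

lemma walk_take: "walk src tgt u P v \<Longrightarrow> n \<le> length P \<Longrightarrow> walk src tgt u (take n P) (vtx tgt u P n)"
  and walk_drop: "walk src tgt u P v \<Longrightarrow> n \<le> length P \<Longrightarrow> walk src tgt (vtx tgt u P n) (drop n P) v"
proof -
  assume w: "walk src tgt u P v" and n: "n \<le> length P"
  from w have "walk src tgt u (take n P @ drop n P) v" by simp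
  then obtain x where 1: "walk src tgt u (take n P) x" and 2: "walk src tgt x (drop n P) v"
    using walk_append by metis
  from walk_end[OF 1] have "x = vtx tgt u P n" using n vtx_take[OF n] by simp
  then show "walk src tgt u (take n P) (vtx tgt u P n)" "walk src tgt (vtx tgt u P n) (drop n P) v"
    using 1 2 by auto
qed

lemma walk_src: "walk src tgt u P v \<Longrightarrow> n < length P \<Longrightarrow> src (P ! n) = vtx tgt u P n"
proof -
  assume w: "walk src tgt u P v" and n: "n < length P"
  have "walk src tgt (vtx tgt u P n) (drop n P) v" using walk_drop[OF w] n by simp
  moreover have "drop n P = P ! n # drop (Suc n) P" using n by (simp add: Cons_nth_drop_Suc)
  ultimately show ?thesis by simp
qed

lemma path_take: "is_path src tgt As u P v \<Longrightarrow> n \<le> length P \<Longrightarrow> is_path src tgt As u (take n P) (vtx tgt u P n)"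
proof -
  assume p: "is_path src tgt As u P v" and n: "n \<le> length P"
  have "u # map tgt (take n P) = take (Suc n) (u # map tgt P)" by (simp add: take_map)
  then have "distinct (u # map tgt (take n P))" using p unfolding is_path_def
    by (metis distinct_take)
  then show ?thesis using p n walk_take[of src tgt u P v n] unfolding is_path_def
    by (meson order.trans set_take_subset)
qed

lemma path_drop: "is_path src tgt As u P v \<Longrightarrow> n \<le> length P \<Longrightarrow> is_path src tgt As (vtx tgt u P n) (drop n P) v"
proof -
  assume p: "is_path src tgt As u P v" and n: "n \<le> length P"
  have "vtx tgt u P n # map tgt (drop n P) = drop n (u # map tgt P)"
    unfolding vtx_def using n
    by (metis Cons_nth_drop_Suc drop_Suc_Cons drop_map length_Cons length_map less_Suc_eq_le)
  then have "distinct (vtx tgt u P n # map tgt (drop n P))" using p unfolding is_path_def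
    by (metis distinct_drop)
  then show ?thesis using p n walk_drop[of src tgt u P v n] unfolding is_path_def
    by (meson order.trans set_drop_subset)
qed

lemma plen_append[simp]: "plen w (xs @ ys) = plen w xs + plen w ys" by (simp add: plen_def)
lemma plen_Cons[simp]: "plen w (x # ys) = w x + plen w ys" by (simp add: plen_def)
lemma plen_Nil[simp]: "plen w [] = 0" by (simp add: plen_def)

lemma plen_nonneg: "set P \<subseteq> As \<Longrightarrow> \<forall>e\<in>As. w e \<ge> 0 \<Longrightarrow> plen w P \<ge> 0"
  unfolding plen_def by (induction P) auto

lemma plen_slice: "a \<le> b \<Longrightarrow> b \<le> length xs \<Longrightarrow> plen w (drop a (take b xs)) = (\<Sum>n\<in>{a..<b}. w (xs ! n))"
proof -
  assume ab: "a \<le> b" "b \<le> length xs"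
  have "plen w (drop a (take b xs)) = (\<Sum>i = 0..<b - a. w (drop a (take b xs) ! i))"
    unfolding plen_def using ab by (simp add: sum_list_sum_nth min_absorb2)
  also have "\<dots> = (\<Sum>i = 0..<b - a. w (xs ! (i + a)))"
    by (rule sum.cong) (use ab in \<open>auto simp: add.commute\<close>)
  also have "\<dots> = (\<Sum>n\<in>{a..<b}. w (xs ! n))"
    using sum.shift_bounds_nat_ivl[of "\<lambda>n. w (xs ! n)" 0 a "b - a"] ab by simp
  finally show ?thesis .
qed

lemma plen_sum: "plen w xs = (\<Sum>n\<in>{0..<length xs}. w (xs ! n))"
  using plen_slice[of 0 "length xs" xs w] by simp

lemma shortcut:
  "walk src tgt u W v \<Longrightarrow> set W \<subseteq> As \<Longrightarrow> \<forall>e\<in>As. w e \<ge> 0 \<Longrightarrow>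
    \<exists>Q. is_path src tgt As u Q v \<and> plen w Q \<le> plen w W"
proof (induction W arbitrary: u)
  case Nil then show ?case by (intro exI[of _ "[]"]) (simp add: is_path_def)
next
  case (Cons e W)
  then have e: "src e = u" "walk src tgt (tgt e) W v" "e \<in> As" "set W \<subseteq> As" by auto
  obtain Q where Q: "is_path src tgt As (tgt e) Q v" "plen w Q \<le> plen w W"
    using Cons.IH[OF e(2) e(4) Cons.prems(3)] by blast
  have we: "w e \<ge> 0" using e(3) Cons.prems(3) by auto
  show ?case
  proof (cases "u \<in> set (tgt e # map tgt Q)")
    case True
    then obtain k where k: "k < length (tgt e # map tgt Q)" "(tgt e # map tgt Q) ! k = u"
      by (metis in_set_conv_nth)
    then have k': "k \<le> length Q" "vtx tgt (tgt e) Q k = u" by (auto simp: vtx_def)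
    have p: "is_path src tgt As u (drop k Q) v" using path_drop[OF Q(1) k'(1)] k'(2) by simp
    have "plen w Q = plen w (take k Q) + plen w (drop k Q)"
      by (metis append_take_drop_id plen_append)
    moreover have "plen w (take k Q) \<ge> 0"
      using plen_nonneg[of "take k Q" As w] Q(1) Cons.prems(3) unfolding is_path_def
      by (meson order.trans set_take_subset)
    ultimately have "plen w (drop k Q) \<le> plen w (e # W)" using Q(2) we by simp
    then show ?thesis using p by blast
  next
    case False
    have "is_path src tgt As u (e # Q) v"
      using Q(1) e False unfolding is_path_def by auto
    moreover have "plen w (e # Q) \<le> plen w (e # W)" using Q(2) by simp
    ultimately show ?thesis by blast
  qed
qed



lemma tseq_len[simp]: "length (tseq U L m n) = n"
  by (induction n) (auto simp: Let_def)

lemma tseq_take: "n \<le> n' \<Longrightarrow> take n (tseq U L m n') = tseq U L m n"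
proof (induction n')
  case 0 then show ?case by simp
next
  case (Suc n')
  show ?case
  proof (cases "n = Suc n'")
    case True then show ?thesis using tseq_len by (metis order_refl take_all)
  next
    case False
    then have "n \<le> n'" using Suc.prems by simp
    then show ?thesis using Suc.IH by (simp add: Let_def)
  qed
qed

lemma ereal_aux1: "ereal a \<le> W - ereal b \<Longrightarrow> ereal (b + a) \<le> W"
  by (cases W) auto
lemma ereal_aux2: "ereal a \<le> W - ereal b \<Longrightarrow> 0 \<le> W - ereal (b + a)"
  by (cases W) auto

locale greedy =
  fixes U L :: "nat \<Rightarrow> nat \<Rightarrow> ereal" and m :: nat and Lr :: "nat \<Rightarrow> nat \<Rightarrow> real"
  assumes Lfin: "\<And>i j. i < j \<Longrightarrow> j \<le> m + 1 \<Longrightarrow> L i j = ereal (Lr i j)"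
    and UL: "\<And>i j. i < j \<Longrightarrow> j \<le> m + 1 \<Longrightarrow> L i j \<le> U i j"
    and U0: "U 0 (m + 1) \<noteq> \<infinity>"
begin

definition tt :: "nat \<Rightarrow> real" where "tt k = tseq U L m m ! (k - 1)"

definition Sk :: "nat \<Rightarrow> ereal set" where
  "Sk k = {U i j - L i j - ereal (\<Sum>l\<in>{i+1..<k}. tt l) | i j. i < k \<and> k < j \<and> j \<le> m + 1}"

lemma Sk_mem: "i < k \<Longrightarrow> k < j \<Longrightarrow> j \<le> m + 1 \<Longrightarrow>
   U i j - L i j - ereal (\<Sum>l\<in>{i+1..<k}. tt l) \<in> Sk k"
  unfolding Sk_def by blast

lemma tt_eq: assumes "1 \<le> k" "k \<le> m" shows "tt k = real_of_ereal (Min (Sk k))"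
proof -
  obtain n where kn: "k = Suc n" using assms by (cases k) auto
  define ts where "ts = tseq U L m n"
  have "tt k = tseq U L m (Suc n) ! n"
    unfolding tt_def using tseq_take[of k m U L m] assms kn nth_take[of n k "tseq U L m m"]
    by simp
  also have "\<dots> = real_of_ereal (Min {U i j - L i j - ereal (\<Sum>l\<in>{i+1..<k}. ts ! (l - 1)) | i j.
                                  i < k \<and> k < j \<and> j \<le> m + 1})"
    unfolding kn ts_def by (simp add: Let_def nth_append)
  also have "\<dots> = real_of_ereal (Min (Sk k))"
  proof -
    have sc: "\<And>i. (\<Sum>l\<in>{i+1..<k}. ts ! (l - 1)) = (\<Sum>l\<in>{i+1..<k}. tt l)"
    proof (rule sum.cong)
        fix i l assume l: "l \<in> {i+1..<k}"
        have "take n (tseq U L m m) = ts" unfolding ts_def using assms kn by (simp add: tseq_take)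
        moreover have "l - 1 < n" using l kn by auto
        ultimately show "ts ! (l - 1) = tt l" unfolding tt_def
          using nth_take[of "l - 1" n "tseq U L m m"] by simp
    qed simp
  then show ?thesis unfolding Sk_def by simp
  qed
  finally show ?thesis .
qed

lemma Sk_fin: "finite (Sk k)"
proof -
  have "Sk k \<subseteq> (\<lambda>(i, j). U i j - L i j - ereal (\<Sum>l\<in>{i+1..<k}. tt l)) ` ({0..m+1} \<times> {0..m+1})"
    unfolding Sk_def by auto
  then show ?thesis by (rule finite_subset) simp
qed

lemma key: "1 \<le> k \<Longrightarrow> k \<le> m \<Longrightarrow> tt k \<ge> 0 \<and> ereal (tt k) = Min (Sk k)"
proof (induction k rule: less_induct)
  case (less k)
  have ne: "U 0 (m+1) - L 0 (m+1) - ereal (\<Sum>l\<in>{0+1..<k}. tt l) \<in> Sk k"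
    using Sk_mem less.prems by auto
  then have nonempty: "Sk k \<noteq> {}" by auto
  have pos: "0 \<le> x" if x: "x \<in> Sk k" for x
  proof -
    obtain i j where ij: "i < k" "k < j" "j \<le> m + 1"
      and xe: "x = U i j - L i j - ereal (\<Sum>l\<in>{i+1..<k}. tt l)"
      using x unfolding Sk_def by auto
    show ?thesis
    proof (cases "i = k - 1")
      case True
      then have "x = U i j - L i j" using xe ij by simp
      then show ?thesis using UL[of i j] Lfin[of i j] ij by (cases "U i j") auto
    next
      case False
      then have i: "i < k - 1" using ij by simp
      have IH: "ereal (tt (k-1)) = Min (Sk (k-1))" using less.IH[of "k-1"] less.prems i by auto
      have "U i j - L i j - ereal (\<Sum>l\<in>{i+1..<k-1}. tt l) \<in> Sk (k-1)"
        using Sk_mem[of i "k-1" j] i ij by auto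
      then have "ereal (tt (k-1)) \<le> U i j - L i j - ereal (\<Sum>l\<in>{i+1..<k-1}. tt l)"
        using IH Sk_fin by simp
      then have "0 \<le> U i j - L i j - ereal ((\<Sum>l\<in>{i+1..<k-1}. tt l) + tt (k-1))"
        by (rule ereal_aux2)
      moreover have "(\<Sum>l\<in>{i+1..<k-1}. tt l) + tt (k-1) = (\<Sum>l\<in>{i+1..<k}. tt l)"
      proof -
        have "Suc (k - 1) = k" using i by simp
        then show ?thesis using sum.atLeastLessThan_Suc[of "i+1" "k-1" tt] i by simp
      qed
      ultimately show ?thesis using xe by simp
    qed
  qed
  have minin: "Min (Sk k) \<in> Sk k" using Sk_fin nonempty by simp
  have "Min (Sk k) \<le> U 0 (m+1) - L 0 (m+1) - ereal (\<Sum>l\<in>{0+1..<k}. tt l)"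
    using ne Sk_fin by simp
  moreover have "U 0 (m+1) - L 0 (m+1) - ereal (\<Sum>l\<in>{0+1..<k}. tt l) \<noteq> \<infinity>"
    using U0 Lfin[of 0 "m+1"] by (cases "U 0 (m+1)") auto
  ultimately have fin: "Min (Sk k) \<noteq> \<infinity>" by auto
  have p: "0 \<le> Min (Sk k)" using pos minin by blast
  have "ereal (real_of_ereal (Min (Sk k))) = Min (Sk k)" using fin p
    by (cases "Min (Sk k)") auto
  then show ?case using tt_eq[OF less.prems] p
    by (metis ereal_less_eq(5) zero_ereal_def)
qed

lemma tt_nonneg: "1 \<le> k \<Longrightarrow> k \<le> m \<Longrightarrow> tt k \<ge> 0"
  using key by blast

lemma tt_le: "1 \<le> k \<Longrightarrow> k \<le> m \<Longrightarrow> i < k \<Longrightarrow> k < j \<Longrightarrow> j \<le> m + 1 \<Longrightarrow>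
   ereal (tt k) \<le> U i j - L i j - ereal (\<Sum>l\<in>{i+1..<k}. tt l)"
proof -
  assume a: "1 \<le> k" "k \<le> m" "i < k" "k < j" "j \<le> m + 1"
  have "U i j - L i j - ereal (\<Sum>l\<in>{i+1..<k}. tt l) \<in> Sk k" unfolding Sk_def using a by auto
  then show ?thesis using key[OF a(1,2)] Sk_fin by simp
qed

lemma tt_attained: "1 \<le> k \<Longrightarrow> k \<le> m \<Longrightarrow> \<exists>i j. i < k \<and> k < j \<and> j \<le> m + 1 \<and>
   ereal (tt k) = U i j - L i j - ereal (\<Sum>l\<in>{i+1..<k}. tt l)"
proof -
  assume a: "1 \<le> k" "k \<le> m"
  have "Sk k \<noteq> {}" using Sk_mem[of 0 k "m+1"] a by auto
  then have "Min (Sk k) \<in> Sk k" using Sk_fin by simp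
  then show ?thesis using key[OF a] unfolding Sk_def by auto
qed

lemma C1: "i < j \<Longrightarrow> j \<le> m + 1 \<Longrightarrow> ereal (\<Sum>l\<in>{i+1..<j}. tt l) \<le> U i j - L i j"
proof -
  assume a: "i < j" "j \<le> m + 1"
  show ?thesis
  proof (cases "j = i + 1")
    case True
    then show ?thesis using UL[OF a] Lfin[OF a] by (cases "U i j") auto
  next
    case False
    define k where "k = j - 1"
    have k: "1 \<le> k" "k \<le> m" "i < k" "k < j" using a False unfolding k_def by auto
    have "ereal ((\<Sum>l\<in>{i+1..<k}. tt l) + tt k) \<le> U i j - L i j"
      using tt_le[OF k a(2)] by (rule ereal_aux1)
    moreover have "(\<Sum>l\<in>{i+1..<k}. tt l) + tt k = (\<Sum>l\<in>{i+1..<j}. tt l)"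
      using k sum.atLeastLessThan_Suc[of "i+1" k tt] unfolding k_def by (simp add: Suc_le_eq)
    ultimately show ?thesis by simp
  qed
qed

lemma C2:
  assumes nn: "\<forall>l\<in>{1..m}. T' l \<ge> 0"
    and H: "\<forall>i j. i < j \<and> j \<le> m + 1 \<longrightarrow> ereal (\<Sum>l\<in>{i+1..<j}. T' l) \<le> U i j - L i j"
  shows "(\<Sum>l=1..m. T' l) \<le> (\<Sum>l=1..m. tt l)"
proof -
  have "k \<le> m \<Longrightarrow> (\<Sum>l\<in>{1..<k+1}. T' l) \<le> (\<Sum>l\<in>{1..<k+1}. tt l)" for k
  proof (induction k rule: less_induct)
    case (less k)
    show ?case
    proof (cases "k = 0")
      case True then show ?thesis by simp
    next
      case False
      then have k: "1 \<le> k" "k \<le> m" using less.prems by auto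
      obtain i j where ij: "i < k" "k < j" "j \<le> m + 1"
        and eq: "ereal (tt k) = U i j - L i j - ereal (\<Sum>l\<in>{i+1..<k}. tt l)"
        using tt_attained[OF k] by blast
      define w where "w = (\<Sum>l\<in>{i+1..<k}. tt l) + tt k"
      have W: "U i j - L i j = ereal w" using eq unfolding w_def
        by (cases "U i j - L i j") auto
      have "(\<Sum>l\<in>{1..<k+1}. T' l) \<le> (\<Sum>l\<in>{1..<j}. T' l)"
        by (rule sum_mono2) (use ij nn in auto)
      also have "\<dots> = (\<Sum>l\<in>{1..<i+1}. T' l) + (\<Sum>l\<in>{i+1..<j}. T' l)"
        using sum.atLeastLessThan_concat[of 1 "i+1" j T'] ij by simp
      also have "\<dots> \<le> (\<Sum>l\<in>{1..<i+1}. T' l) + w"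
      proof -
        have "ereal (\<Sum>l\<in>{i+1..<j}. T' l) \<le> U i j - L i j" using H ij by (meson less_trans)
        then show ?thesis using W by simp
      qed
      also have "\<dots> \<le> (\<Sum>l\<in>{1..<i+1}. tt l) + w"
        using less.IH[of i] ij less.prems by simp
      also have "\<dots> = (\<Sum>l\<in>{1..<k+1}. tt l)"
      proof -
        have "(\<Sum>l\<in>{1..<k+1}. tt l) = (\<Sum>l\<in>{1..<i+1}. tt l) + (\<Sum>l\<in>{i+1..<k+1}. tt l)"
          using sum.atLeastLessThan_concat[of 1 "i+1" "k+1" tt] ij by simp
        moreover have "(\<Sum>l\<in>{i+1..<k+1}. tt l) = w"
          unfolding w_def using ij by simp
        ultimately show ?thesis by simp
      qed
      finally show ?thesis .
    qed
  qed
  from this[of m] show ?thesis by (simp add: atLeastLessThanSuc_atLeastAtMost)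
qed

end


lemma vtx_take2: "a \<le> b \<Longrightarrow> b \<le> length P \<Longrightarrow> vtx tgt u (take b P) a = vtx tgt u P a"
  by (cases a) (auto simp: vtx_def)

locale tollpath =
  fixes src tgt :: "'e \<Rightarrow> 'v" and AT AU :: "'e set" and c d :: "'e \<Rightarrow> nat"
    and s t :: 'v and P :: "'e list"
  assumes disj: "AT \<inter> AU = {}"
    and tf: "\<exists>Q. is_path src tgt AU s Q t"
    and valid: "valid_path src tgt AT AU c d s t P"
begin

abbreviation "N \<equiv> net_arcs AT AU P"
abbreviation "m \<equiv> num_tolls AT P"
abbreviation "nc T \<equiv> net_cost AT c d T"
abbreviation "U \<equiv> Ucal src tgt AT AU d s t P"
abbreviation "L \<equiv> Lcal src tgt AT AU c d s t P"
definition ps :: "nat list" where "ps = filter (\<lambda>n. P ! n \<in> AT) [0..<length P]"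
definition st :: "nat \<Rightarrow> nat" where "st k = (if k = 0 then 0 else ps ! (k - 1) + 1)"
definition en :: "nat \<Rightarrow> nat" where "en k = (if k = m + 1 then length P else ps ! (k - 1))"
definition vx :: "nat \<Rightarrow> 'v" where "vx n = vtx tgt s P n"
definition C :: "('e \<Rightarrow> real) \<Rightarrow> nat \<Rightarrow> nat \<Rightarrow> real" where
  "C T a b = (\<Sum>n\<in>{a..<b}. nc T (P ! n))"

lemma pathP: "is_path src tgt N s P t"
  using valid unfolding valid_path_def shortest_def by simp

lemma walkP: "walk src tgt s P t" using pathP unfolding is_path_def by simp

lemma tolls_ps: "tolls AT P = map (nth P) ps"
proof -
  have "filter (\<lambda>e. e \<in> AT) (map (nth P) [0..<length P]) = map (nth P) ps"
    unfolding ps_def by (simp add: filter_map comp_def)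
  then show ?thesis unfolding tolls_def by (simp add: map_nth)
qed

lemma len_ps: "length ps = m" unfolding num_tolls_def tolls_ps by simp

lemma tau_ps: "1 \<le> k \<Longrightarrow> k \<le> m \<Longrightarrow> tau AT P k = P ! (ps ! (k - 1))"
  unfolding tau_def tolls_ps using len_ps by simp

lemma ps_sorted: "sorted_wrt (<) ps" unfolding ps_def by (simp add: sorted_wrt_filter)

lemma ps_set: "set ps = {n. n < length P \<and> P ! n \<in> AT}" unfolding ps_def by auto

lemma ps_less_iff: "a < m \<Longrightarrow> b < m \<Longrightarrow> ps ! a < ps ! b \<longleftrightarrow> a < b"
proof -
  assume ab: "a < m" "b < m"
  have 1: "x < y \<Longrightarrow> y < m \<Longrightarrow> ps ! x < ps ! y" for x y
    using ps_sorted len_ps sorted_wrt_nth_less by metis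
  show ?thesis
  proof
    assume "ps ! a < ps ! b" then show "a < b" using 1[of b a] ab by (metis less_asym nat_neq_iff)
  next
    assume "a < b" then show "ps ! a < ps ! b" using 1 ab by blast
  qed
qed

lemma ps_bound: "r < m \<Longrightarrow> ps ! r < length P \<and> P ! (ps ! r) \<in> AT"
  using ps_set len_ps nth_mem by (metis (no_types, lifting) mem_Collect_eq)

lemma ps_distinct: "distinct ps" unfolding ps_def by simp

lemma st_en: "1 \<le> i \<Longrightarrow> i \<le> m \<Longrightarrow> st i = en i + 1"
  unfolding st_def en_def by simp

lemma en_le: "1 \<le> j \<Longrightarrow> j \<le> m + 1 \<Longrightarrow> en j \<le> length P"
proof -
  assume j: "1 \<le> j" "j \<le> m + 1"
  show ?thesis
  proof (cases "j = m + 1")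
    case False
    then have "j - 1 < m" using j by linarith
    then show ?thesis using ps_bound[of "j - 1"] False unfolding en_def by simp
  qed (simp add: en_def)
qed

lemma en_lt: "1 \<le> j \<Longrightarrow> j \<le> m \<Longrightarrow> en j < length P"
  unfolding en_def using ps_bound[of "j - 1"] by auto

lemma st_le_en: "i < j \<Longrightarrow> j \<le> m + 1 \<Longrightarrow> st i \<le> en j"
proof -
  assume ij: "i < j" "j \<le> m + 1"
  show ?thesis
  proof (cases "i = 0")
    case True then show ?thesis by (simp add: st_def)
  next
    case False
    show ?thesis
    proof (cases "j = m + 1")
      case True
      have "i - 1 < m" using False ij by linarith
      then show ?thesis using True False ps_bound[of "i - 1"] by (simp add: st_def en_def)
    next
      case False': False
      have "ps ! (i - 1) < ps ! (j - 1)" using ps_less_iff[of "i-1" "j-1"] ij False False' by simp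
      then show ?thesis using False False' by (simp add: st_def en_def)
    qed
  qed
qed

lemma en_mono: "1 \<le> j \<Longrightarrow> j \<le> i \<Longrightarrow> i \<le> m \<Longrightarrow> en j \<le> en i"
proof -
  assume a: "1 \<le> j" "j \<le> i" "i \<le> m"
  show ?thesis
  proof (cases "i = j")
    case False
    then have "j - 1 < i - 1" "i - 1 < m" using a by linarith+
    then have "ps ! (j - 1) < ps ! (i - 1)" using ps_less_iff[of "j-1" "i-1"] by simp
    then show ?thesis using a unfolding en_def by simp
  qed simp
qed

lemma vx_st: "i \<le> m \<Longrightarrow> term_pt tgt AT s P i = vx (st i)"
proof (cases "i = 0")
  case True then show ?thesis by (simp add: term_pt_def vx_def st_def)
next
  case False
  assume i: "i \<le> m"
  have "ps ! (i - 1) < length P" using ps_bound[of "i - 1"] i False by simp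
  then show ?thesis using False i tau_ps[of i] by (simp add: term_pt_def vx_def st_def)
qed

lemma vx_en: "1 \<le> j \<Longrightarrow> j \<le> m + 1 \<Longrightarrow> init_pt src AT t P j = vx (en j)"
proof (cases "j = m + 1")
  case True then show ?thesis using walk_end[OF walkP] by (simp add: init_pt_def vx_def en_def)
next
  case False
  assume j: "1 \<le> j" "j \<le> m + 1"
  have "ps ! (j - 1) < length P" using ps_bound[of "j - 1"] j False by simp
  then show ?thesis using False j tau_ps[of j] walk_src[OF walkP]
    by (simp add: init_pt_def vx_def en_def)
qed

lemma tollpos: "i < j \<Longrightarrow> j \<le> m + 1 \<Longrightarrow>
   {n\<in>{st i..<en j}. P ! n \<in> AT} = (\<lambda>l. ps ! (l - 1)) ` {i+1..<j}"
proof -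
  assume ij: "i < j" "j \<le> m + 1"
  show ?thesis
  proof (intro equalityI subsetI)
    fix n assume n: "n \<in> {n\<in>{st i..<en j}. P ! n \<in> AT}"
    have "n < length P" using n en_le[of j] ij by auto
    then have "n \<in> set ps" using n ps_set by auto
    then obtain r where r: "r < m" "n = ps ! r" using len_ps by (metis in_set_conv_nth)
    have 1: "i \<le> r"
    proof (cases "i = 0")
      case False
      then have "ps ! (i - 1) < ps ! r" using n r unfolding st_def by auto
      moreover have "i - 1 < m" using False ij by linarith
      ultimately show ?thesis using ps_less_iff[of "i - 1" r] r False by simp
    qed simp
    have 2: "r + 1 < j"
    proof (cases "j = m + 1")
      case False
      then have "ps ! r < ps ! (j - 1)" using n r unfolding en_def by auto
      moreover have "j - 1 < m" using False ij by linarith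
      ultimately show ?thesis using ps_less_iff[of r "j - 1"] r False ij by simp
    qed (use r in simp)
    show "n \<in> (\<lambda>l. ps ! (l - 1)) ` {i+1..<j}"
      using 1 2 r by (intro image_eqI[of _ _ "r + 1"]) auto
  next
    fix n assume "n \<in> (\<lambda>l. ps ! (l - 1)) ` {i+1..<j}"
    then obtain l where l: "l \<in> {i+1..<j}" "n = ps ! (l - 1)" by blast
    have lm: "l - 1 < m" using l ij by auto
    have a: "st i \<le> n"
    proof (cases "i = 0")
      case False
      moreover have "i - 1 < l - 1" "i - 1 < m" using False l lm by auto
      ultimately have "ps ! (i - 1) < ps ! (l - 1)" using ps_less_iff[of "i-1" "l-1"] lm by simp
      then show ?thesis using False l unfolding st_def by simp
    qed (simp add: st_def)
    have b: "n < en j"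
    proof (cases "j = m + 1")
      case True then show ?thesis using ps_bound[OF lm] l unfolding en_def by simp
    next
      case False
      moreover have "l - 1 < j - 1" "j - 1 < m" using False l lm ij by auto
      ultimately have "ps ! (l - 1) < ps ! (j - 1)" using ps_less_iff[of "l-1" "j-1"] lm by simp
      then show ?thesis using False l unfolding en_def by simp
    qed
    show "n \<in> {n\<in>{st i..<en j}. P ! n \<in> AT}" using a b ps_bound[OF lm] l by simp
  qed
qed

lemma tollpos_inj: "j \<le> m + 1 \<Longrightarrow> inj_on (\<lambda>l. ps ! (l - 1)) {i+1..<j}"
proof (rule inj_onI)
  fix x y assume "j \<le> m + 1" "x \<in> {i+1..<j}" "y \<in> {i+1..<j}" "ps ! (x - 1) = ps ! (y - 1)"
  moreover have "x - 1 < m" "y - 1 < m" "x \<ge> 1" "y \<ge> 1" using calculation by auto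
  ultimately show "x = y" using ps_distinct len_ps nth_eq_iff_index_eq[of ps "x-1" "y-1"] by auto
qed

lemma nc_nonneg: "toll_vector AT T \<Longrightarrow> nc T e \<ge> 0"
  unfolding toll_vector_def net_cost_def by auto

lemma C_nonneg: "toll_vector AT T \<Longrightarrow> C T a b \<ge> 0"
  unfolding C_def using nc_nonneg by (simp add: sum_nonneg)

lemma C_split: "a \<le> b \<Longrightarrow> b \<le> e \<Longrightarrow> C T a b + C T b e = C T a e"
  unfolding C_def by (rule sum.atLeastLessThan_concat)

lemma C_mono: "toll_vector AT T \<Longrightarrow> a \<le> b \<Longrightarrow> b \<le> e \<Longrightarrow> C T a b \<le> C T a e"
  using C_split[of a b e T] C_nonneg[of T b e] by simp

lemma nc_tau: "1 \<le> k \<Longrightarrow> k \<le> m \<Longrightarrow> nc T (P ! en k) = real (c (tau AT P k)) + T (tau AT P k)"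
  using tau_ps[of k] ps_bound[of "k - 1"] unfolding en_def net_cost_def by simp

lemma C_mid: "1 \<le> k \<Longrightarrow> k \<le> m \<Longrightarrow> a \<le> en k \<Longrightarrow> st k \<le> b \<Longrightarrow>
   C T a b = C T a (en k) + nc T (P ! en k) + C T (st k) b"
proof -
  assume k: "1 \<le> k" "k \<le> m" "a \<le> en k" "st k \<le> b"
  have e: "st k = Suc (en k)" using st_en[OF k(1,2)] by simp
  have "C T (en k) b = nc T (P ! en k) + C T (st k) b"
    unfolding C_def e using k e by (subst sum.atLeast_Suc_lessThan) auto
  then show ?thesis using C_split[of a "en k" b T] k e by simp
qed

lemma C_decomp: "i < j \<Longrightarrow> j \<le> m + 1 \<Longrightarrow>
   C T (st i) (en j) = C (\<lambda>_. 0) (st i) (en j) + (\<Sum>l\<in>{i+1..<j}. T (tau AT P l))"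
proof -
  assume ij: "i < j" "j \<le> m + 1"
  have "C T (st i) (en j) = (\<Sum>n\<in>{st i..<en j}. nc (\<lambda>_. 0) (P ! n) + (if P ! n \<in> AT then T (P ! n) else 0))"
    unfolding C_def by (rule sum.cong) (auto simp: net_cost_def)
  also have "\<dots> = C (\<lambda>_. 0) (st i) (en j) + (\<Sum>n\<in>{st i..<en j}. if P ! n \<in> AT then T (P ! n) else 0)"
    unfolding C_def by (simp add: sum.distrib)
  also have "(\<Sum>n\<in>{st i..<en j}. if P ! n \<in> AT then T (P ! n) else 0) = (\<Sum>n\<in>{n\<in>{st i..<en j}. P ! n \<in> AT}. T (P ! n))"
    by (rule sum.inter_filter[symmetric]) simp
  also have "\<dots> = (\<Sum>l\<in>{i+1..<j}. T (P ! (ps ! (l - 1))))"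
    unfolding tollpos[OF ij] using sum.reindex[OF tollpos_inj[OF ij(2)], of "\<lambda>n. T (P ! n)" ] by simp
  also have "\<dots> = (\<Sum>l\<in>{i+1..<j}. T (tau AT P l))"
    by (rule sum.cong) (use ij tau_ps in auto)
  finally show ?thesis .
qed

lemma C_slice: "a \<le> b \<Longrightarrow> b \<le> length P \<Longrightarrow> plen (nc T) (drop a (take b P)) = C T a b"
  unfolding C_def by (rule plen_slice)

lemma plen_AU: "set R \<subseteq> AU \<Longrightarrow> plen (nc T) R = plen (\<lambda>e. real (d e)) R"
  using disj by (induction R) (auto simp: net_cost_def)

lemma G0:
  assumes T: "toll_vector AT T" and cons: "consistent src tgt AT AU c d s t P T"
    and ab: "a \<le> b" "b \<le> length P" and R: "walk src tgt (vx a) R (vx b)" "set R \<subseteq> N"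
  shows "C T a b \<le> plen (nc T) R"
proof -
  have w1: "walk src tgt s (take a P) (vx a)" using walk_take[OF walkP] ab unfolding vx_def by simp
  have w2: "walk src tgt (vx b) (drop b P) t" using walk_drop[OF walkP] ab unfolding vx_def by simp
  define W where "W = take a P @ R @ drop b P"
  have wW: "walk src tgt s W t" unfolding W_def using w1 w2 R(1) walk_append by metis
  have sW: "set W \<subseteq> N" using pathP R(2) unfolding W_def is_path_def
    by (auto dest: in_set_takeD in_set_dropD)
  have nn: "\<forall>e\<in>N. nc T e \<ge> 0" using nc_nonneg[OF T] by auto
  obtain Q where Q: "is_path src tgt N s Q t" "plen (nc T) Q \<le> plen (nc T) W"
    using shortcut[OF wW sW nn] by blast
  have "plen (nc T) P \<le> plen (nc T) Q" using cons Q(1) unfolding consistent_def shortest_def by blast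
  moreover have "plen (nc T) P = plen (nc T) (take a P) + C T a b + plen (nc T) (drop b P)"
  proof -
    have "take b P = take a P @ drop a (take b P)" using ab
      by (metis append_take_drop_id min.absorb1 take_take)
    then have "P = take a P @ drop a (take b P) @ drop b P" by (metis append.assoc append_take_drop_id)
    then have "plen (nc T) P = plen (nc T) (take a P @ drop a (take b P) @ drop b P)" by simp
    then show ?thesis using C_slice[OF ab, of T] by simp
  qed
  ultimately show ?thesis using Q(2) unfolding W_def by simp
qed

lemma G:
  assumes T: "toll_vector AT T" and cons: "consistent src tgt AT AU c d s t P T"
    and ij: "i < j" "j \<le> m + 1"
  shows "ereal (C T (st i) (en j)) \<le> U i j"
  unfolding Ucal_def
proof (rule Inf_greatest)
  fix x assume "x \<in> {ereal (plen (\<lambda>e. real (d e)) Q) | Q.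
        is_path src tgt AU (term_pt tgt AT s P i) Q (init_pt src AT t P j)}"
  then obtain Q where x: "x = ereal (plen (\<lambda>e. real (d e)) Q)"
    and Q: "is_path src tgt AU (term_pt tgt AT s P i) Q (init_pt src AT t P j)" by blast
  have "walk src tgt (vx (st i)) Q (vx (en j))" using Q vx_st vx_en ij unfolding is_path_def by auto
  moreover have "set Q \<subseteq> N" using Q unfolding is_path_def net_arcs_def by auto
  ultimately have "C T (st i) (en j) \<le> plen (nc T) Q"
    using G0[OF T cons st_le_en[OF ij] en_le] ij by auto
  moreover have "plen (nc T) Q = plen (\<lambda>e. real (d e)) Q" using Q plen_AU unfolding is_path_def by auto
  ultimately show "ereal (C T (st i) (en j)) \<le> x" using x by simp
qed

lemma zero_tv: "toll_vector AT (\<lambda>_. 0)" unfolding toll_vector_def by simp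
lemma zero_cons: "consistent src tgt AT AU c d s t P (\<lambda>_. 0)"
  using valid unfolding valid_path_def consistent_def by simp

lemma U_le_slice: assumes l: "l \<le> m" shows "U l (l+1) \<le> ereal (C (\<lambda>_. 0) (st l) (en (l+1)))"
proof -
  define a where "a = st l"
  define b where "b = en (l + 1)"
  have ab: "a \<le> b" "b \<le> length P" unfolding a_def b_def using st_le_en[of l "l+1"] en_le[of "l+1"] l by auto
  define S where "S = drop a (take b P)"
  have p1: "is_path src tgt N s (take b P) (vtx tgt s P b)" using path_take[OF pathP ab(2)] .
  have e: "vtx tgt s (take b P) a = vx a" unfolding vx_def by (rule vtx_take2[OF ab])
  have "a \<le> length (take b P)" using ab by simp
  from path_drop[OF p1 this]
  have p2: "is_path src tgt N (vx a) S (vx b)" unfolding e S_def vx_def .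
  have emp: "{n\<in>{a..<b}. P ! n \<in> AT} = {}" unfolding a_def b_def using tollpos[of l "l+1"] l by simp
  have "set S \<subseteq> AU"
  proof
    fix e assume "e \<in> set S"
    then obtain k where k: "k < length S" "e = S ! k" by (metis in_set_conv_nth)
    have e: "e = P ! (a + k)" "a + k \<in> {a..<b}" using k ab unfolding S_def by auto
    then have "e \<notin> AT" using emp by auto
    moreover have "e \<in> N" using p2 k nth_mem unfolding is_path_def by blast
    ultimately show "e \<in> AU" unfolding net_arcs_def by auto
  qed
  then have "is_path src tgt AU (term_pt tgt AT s P l) S (init_pt src AT t P (l+1))"
    using p2 vx_st[OF l] vx_en[of "l+1"] l unfolding is_path_def a_def b_def by auto
  then have "U l (l+1) \<le> ereal (plen (\<lambda>e. real (d e)) S)" unfolding Ucal_def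
    by (intro Inf_lower) blast
  also have "plen (\<lambda>e. real (d e)) S = C (\<lambda>_. 0) a b"
    using plen_AU[OF \<open>set S \<subseteq> AU\<close>, of "\<lambda>_. 0"] C_slice[OF ab] unfolding S_def by simp
  finally show ?thesis unfolding a_def b_def .
qed

lemma U_slice: "l \<le> m \<Longrightarrow> U l (l+1) = ereal (C (\<lambda>_. 0) (st l) (en (l+1)))"
  using U_le_slice G[OF zero_tv zero_cons, of l "l+1"] by (simp add: antisym)

lemma L_real: "i < j \<Longrightarrow> j \<le> m + 1 \<Longrightarrow>
  (\<Sum>l\<in>{i..<j}. C (\<lambda>_. 0) (st l) (en (l+1))) + (\<Sum>l\<in>{i+1..<j}. real (c (tau AT P l)))
   = C (\<lambda>_. 0) (st i) (en j)"
proof (induction j)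
  case 0 then show ?case by simp
next
  case (Suc j)
  show ?case
  proof (cases "j = i")
    case True then show ?thesis by simp
  next
    case False
    then have j: "i < j" "1 \<le> j" "j \<le> m" using Suc.prems by auto
    have IH: "(\<Sum>l\<in>{i..<j}. C (\<lambda>_. 0) (st l) (en (l+1))) + (\<Sum>l\<in>{i+1..<j}. real (c (tau AT P l)))
       = C (\<lambda>_. 0) (st i) (en j)" using Suc.IH j by simp
    have "C (\<lambda>_. 0) (st i) (en (Suc j)) = C (\<lambda>_. 0) (st i) (en j) + nc (\<lambda>_. 0) (P ! en j) + C (\<lambda>_. 0) (st j) (en (Suc j))"
      using C_mid[OF j(2,3), of "st i" "en (Suc j)"] st_le_en[of i j] st_le_en[of j "Suc j"] j by simp
    moreover have "nc (\<lambda>_. 0) (P ! en j) = real (c (tau AT P j))" using nc_tau[OF j(2,3)] by simp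
    ultimately show ?thesis using IH j by simp
  qed
qed

lemma L_eq: "i < j \<Longrightarrow> j \<le> m + 1 \<Longrightarrow> L i j = ereal (C (\<lambda>_. 0) (st i) (en j))"
proof -
  assume ij: "i < j" "j \<le> m + 1"
  have "(\<Sum>l\<in>{i..<j}. U l (l + 1)) = (\<Sum>l\<in>{i..<j}. ereal (C (\<lambda>_. 0) (st l) (en (l+1))))"
    by (rule sum.cong) (use ij U_slice in auto)
  then show ?thesis unfolding Lcal_def using L_real[OF ij] by simp
qed

lemma U0fin: "U 0 (m + 1) \<noteq> \<infinity>"
proof -
  obtain Q where Q: "is_path src tgt AU s Q t" using tf by blast
  then have "U 0 (m + 1) \<le> ereal (plen (\<lambda>e. real (d e)) Q)" unfolding Ucal_def
    by (intro Inf_lower) (auto simp: term_pt_def init_pt_def)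
  then show ?thesis by auto
qed

end


context tollpath begin

lemma consistent_if:
  assumes T: "toll_vector AT T"
    and H: "\<And>i j. i < j \<Longrightarrow> j \<le> m + 1 \<Longrightarrow> ereal (C T (st i) (en j)) \<le> U i j"
  shows "consistent src tgt AT AU c d s t P T"
proof -
  have claim: "length Q = n \<Longrightarrow> is_path src tgt N s Q (init_pt src AT t P j) \<Longrightarrow> 1 \<le> j \<Longrightarrow> j \<le> m + 1
     \<Longrightarrow> C T 0 (en j) \<le> plen (nc T) Q" for n Q j
  proof (induction n arbitrary: Q j rule: less_induct)
    case (less n)
    note Qp = less.prems(2)
    have wQ: "walk src tgt s Q (init_pt src AT t P j)" using Qp unfolding is_path_def by simp
    have sQ: "set Q \<subseteq> N" using Qp unfolding is_path_def by simp
    define A where "A = {q. q < length Q \<and> Q ! q \<in> AT}"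
    show ?case
    proof (cases "A = {}")
      case True
      have "set Q \<subseteq> AU"
      proof
        fix e assume "e \<in> set Q"
        then obtain q where q: "q < length Q" "e = Q ! q" by (metis in_set_conv_nth)
        then have "e \<notin> AT" using True unfolding A_def by auto
        moreover have "e \<in> N" using sQ q nth_mem by blast
        ultimately show "e \<in> AU" unfolding net_arcs_def by auto
      qed
      then have "is_path src tgt AU (term_pt tgt AT s P 0) Q (init_pt src AT t P j)"
        using Qp unfolding is_path_def by (simp add: term_pt_def)
      then have "U 0 j \<le> ereal (plen (\<lambda>e. real (d e)) Q)" unfolding Ucal_def
        by (intro Inf_lower) blast
      moreover have "ereal (C T (st 0) (en j)) \<le> U 0 j" using H less.prems by simp
      ultimately have "ereal (C T (st 0) (en j)) \<le> ereal (plen (\<lambda>e. real (d e)) Q)"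
        by (meson order_trans)
      then have "C T 0 (en j) \<le> plen (\<lambda>e. real (d e)) Q" by (simp add: st_def)
      then show ?thesis using plen_AU[OF \<open>set Q \<subseteq> AU\<close>] by simp
    next
      case False
      have finA: "finite A" unfolding A_def by simp
      define q where "q = Max A"
      have qA: "q \<in> A" unfolding q_def using finA False by simp
      then have q: "q < length Q" "Q ! q \<in> AT" unfolding A_def by auto
      have qmax: "Q ! q' \<notin> AT" if qq: "q < q'" "q' < length Q" for q'
      proof
        assume "Q ! q' \<in> AT"
        then have "q' \<in> A" unfolding A_def using qq by simp
        then have "q' \<le> q" unfolding q_def using finA by simp
        with qq show False by simp
      qed
      have "Q ! q \<in> N" using sQ q(1) nth_mem by blast
      then have "Q ! q \<in> set P" using q(2) disj unfolding net_arcs_def by blast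
      then have "Q ! q \<in> set (tolls AT P)" using q unfolding tolls_def by simp
      then obtain r where r: "r < m" "tolls AT P ! r = Q ! q"
        unfolding num_tolls_def by (metis in_set_conv_nth)
      define i where "i = r + 1"
      have i: "1 \<le> i" "i \<le> m" "tau AT P i = Q ! q" using r unfolding i_def tau_def by auto
      have Qsplit: "Q = take q Q @ Q ! q # drop (Suc q) Q" using q id_take_nth_drop by blast
      have v1: "vtx tgt s Q q = init_pt src AT t P i"
        using walk_src[OF wQ q(1)] i unfolding init_pt_def by simp
      have v2: "vtx tgt s Q (Suc q) = term_pt tgt AT s P i"
        using q i unfolding term_pt_def by simp
      have p1: "is_path src tgt N s (take q Q) (init_pt src AT t P i)"
        using path_take[OF Qp, of q] q v1 by simp
      have p2: "is_path src tgt N (term_pt tgt AT s P i) (drop (Suc q) Q) (init_pt src AT t P j)"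
        using path_drop[OF Qp, of "Suc q"] q v2 by simp
      have IH: "C T 0 (en i) \<le> plen (nc T) (take q Q)"
        using less.IH[of q "take q Q" i] q less.prems(1) p1 i by simp
      have plQ: "plen (nc T) Q = plen (nc T) (take q Q) + nc T (P ! en i) + plen (nc T) (drop (Suc q) Q)"
      proof -
        have "plen (nc T) Q = plen (nc T) (take q Q @ Q ! q # drop (Suc q) Q)" using Qsplit by simp
        moreover have "P ! en i = Q ! q" using i tau_ps[of i] unfolding en_def by simp
        ultimately show ?thesis by simp
      qed
      have nn: "\<forall>e\<in>N. nc T e \<ge> 0" using nc_nonneg[OF T] by auto
      have nn2: "plen (nc T) (drop (Suc q) Q) \<ge> 0"
        using plen_nonneg[OF _ nn] p2 unfolding is_path_def by blast
      show ?thesis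
      proof (cases "i < j")
        case True
        have "set (drop (Suc q) Q) \<subseteq> AU"
        proof
          fix e assume "e \<in> set (drop (Suc q) Q)"
          then obtain k where k: "k < length (drop (Suc q) Q)" "e = drop (Suc q) Q ! k"
            by (metis in_set_conv_nth)
          then have e: "e = Q ! (Suc q + k)" "Suc q + k < length Q" by auto
          then have "e \<notin> AT" using qmax[of "Suc q + k"] by simp
          moreover have "e \<in> N" using sQ e nth_mem by blast
          ultimately show "e \<in> AU" unfolding net_arcs_def by auto
        qed
        then have "is_path src tgt AU (term_pt tgt AT s P i) (drop (Suc q) Q) (init_pt src AT t P j)"
          using p2 unfolding is_path_def by simp
        then have "U i j \<le> ereal (plen (\<lambda>e. real (d e)) (drop (Suc q) Q))" unfolding Ucal_def
          by (intro Inf_lower) blast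
        moreover have "ereal (C T (st i) (en j)) \<le> U i j" using H True less.prems by simp
        ultimately have "ereal (C T (st i) (en j)) \<le> ereal (plen (\<lambda>e. real (d e)) (drop (Suc q) Q))"
          by (meson order_trans)
        then have "C T (st i) (en j) \<le> plen (nc T) (drop (Suc q) Q)"
          using plen_AU[OF \<open>set (drop (Suc q) Q) \<subseteq> AU\<close>, of T] by simp
        moreover have "C T 0 (en j) = C T 0 (en i) + nc T (P ! en i) + C T (st i) (en j)"
          using C_mid[OF i(1,2), of 0 "en j"] st_le_en[OF True] less.prems by simp
        ultimately show ?thesis using IH plQ by simp
      next
        case False
        then have "en j \<le> en i" using en_mono[of j i] i less.prems by simp
        then have "C T 0 (en j) \<le> C T 0 (en i)" using C_mono[OF T] by simp
        then show ?thesis using IH plQ nn2 nc_nonneg[OF T, of "P ! en i"] by simp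
      qed
    qed
  qed
  show ?thesis unfolding consistent_def shortest_def
  proof (intro conjI allI impI)
    show "is_path src tgt N s P t" by (rule pathP)
  next
    fix Q assume "is_path src tgt N s Q t"
    then have "C T 0 (en (m + 1)) \<le> plen (nc T) Q"
      using claim[of Q "length Q" "m + 1"] by (simp add: init_pt_def)
    moreover have "C T 0 (en (m + 1)) = plen (nc T) P"
      using C_slice[of 0 "length P" T] by (simp add: en_def)
    ultimately show "plen (nc T) P \<le> plen (nc T) Q" by simp
  qed
qed

lemma ereal_aux3: "ereal (b + a) \<le> W \<Longrightarrow> ereal a \<le> W - ereal b"
  by (cases W) auto

lemma main:
  "toll_vector AT (opt_toll src tgt AT AU c d s t P)
    \<and> consistent src tgt AT AU c d s t P (opt_toll src tgt AT AU c d s t P)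
    \<and> (\<forall>k\<in>{1..num_tolls AT P}.
          opt_toll src tgt AT AU c d s t P (tau AT P k) = tk src tgt AT AU c d s t P k)
    \<and> (\<forall>T'. toll_vector AT T' \<and> consistent src tgt AT AU c d s t P T' \<longrightarrow>
          (\<Sum>k=1..num_tolls AT P. T' (tau AT P k))
            \<le> (\<Sum>k=1..num_tolls AT P. tk src tgt AT AU c d s t P k))"
proof -
  interpret g: greedy U L m "\<lambda>i j. C (\<lambda>_. 0) (st i) (en j)"
  proof
    show "\<And>i j. i < j \<Longrightarrow> j \<le> m + 1 \<Longrightarrow> L i j = ereal (C (\<lambda>_. 0) (st i) (en j))" by (rule L_eq)
    show "\<And>i j. i < j \<Longrightarrow> j \<le> m + 1 \<Longrightarrow> L i j \<le> U i j"
      using L_eq G[OF zero_tv zero_cons] by simp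
    show "U 0 (m + 1) \<noteq> \<infinity>" by (rule U0fin)
  qed
  let ?T = "opt_toll src tgt AT AU c d s t P"
  have tk_eq: "tk src tgt AT AU c d s t P k = g.tt k" for k
    unfolding tk_def tvals_def g.tt_def by simp
  have dist: "distinct (tolls AT P)"
  proof -
    have "distinct (map tgt P)" using pathP unfolding is_path_def by simp
    then have "distinct P" by (simp add: distinct_map)
    then show ?thesis unfolding tolls_def by simp
  qed
  have lens: "length (tvals src tgt AT AU c d s t P) = length (tolls AT P)"
    unfolding tvals_def num_tolls_def by simp
  have Ttau: "?T (tau AT P k) = g.tt k" if k: "k \<in> {1..m}" for k
  proof -
    have "k - 1 < length (tolls AT P)" using k unfolding num_tolls_def by auto
    then have "map_of (zip (tolls AT P) (tvals src tgt AT AU c d s t P)) (tau AT P k)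
        = Some (tvals src tgt AT AU c d s t P ! (k - 1))"
      unfolding tau_def using map_of_zip_nth[OF lens[symmetric] dist] lens by simp
    then show ?thesis unfolding opt_toll_def using tk_eq[of k] unfolding tk_def by simp
  qed
  have tv: "toll_vector AT ?T"
    unfolding toll_vector_def
  proof
    fix e assume "e \<in> AT"
    show "0 \<le> ?T e"
    proof (cases "map_of (zip (tolls AT P) (tvals src tgt AT AU c d s t P)) e")
      case None then show ?thesis unfolding opt_toll_def by simp
    next
      case (Some x)
      then have "(e, x) \<in> set (zip (tolls AT P) (tvals src tgt AT AU c d s t P))"
        by (rule map_of_SomeD)
      then obtain r where r: "r < length (tolls AT P)" "tolls AT P ! r = e"
          "tvals src tgt AT AU c d s t P ! r = x"
        using lens by (metis fst_conv in_set_zip snd_conv)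
      have "x = g.tt (r + 1)" using r unfolding g.tt_def tvals_def by simp
      moreover have "g.tt (r + 1) \<ge> 0" using g.tt_nonneg r unfolding num_tolls_def by simp
      ultimately show ?thesis using Some unfolding opt_toll_def by simp
    qed
  qed
  have sumT: "(\<Sum>l\<in>{i+1..<j}. ?T (tau AT P l)) = (\<Sum>l\<in>{i+1..<j}. g.tt l)" if "j \<le> m + 1" for i j
    by (rule sum.cong) (use that Ttau in auto)
  have cons: "consistent src tgt AT AU c d s t P ?T"
  proof (rule consistent_if[OF tv])
    fix i j assume ij: "i < j" "j \<le> m + 1"
    have "ereal (\<Sum>l\<in>{i+1..<j}. g.tt l) \<le> U i j - L i j" by (rule g.C1[OF ij])
    then have "ereal (C (\<lambda>_. 0) (st i) (en j) + (\<Sum>l\<in>{i+1..<j}. g.tt l)) \<le> U i j"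
      using L_eq[OF ij] ereal_aux1 by simp
    then show "ereal (C ?T (st i) (en j)) \<le> U i j" using C_decomp[OF ij, of ?T] sumT[OF ij(2)] by simp
  qed
  have opt: "(\<Sum>k=1..m. T' (tau AT P k)) \<le> (\<Sum>k=1..m. tk src tgt AT AU c d s t P k)"
    if T': "toll_vector AT T'" "consistent src tgt AT AU c d s t P T'" for T'
  proof -
    have nn: "\<forall>l\<in>{1..m}. T' (tau AT P l) \<ge> 0"
    proof
      fix l assume l: "l \<in> {1..m}"
      then have "tau AT P l \<in> AT" using tau_ps[of l] ps_bound[of "l - 1"] by auto
      then show "T' (tau AT P l) \<ge> 0" using T'(1) unfolding toll_vector_def by auto
    qed
    have H: "\<forall>i j. i < j \<and> j \<le> m + 1 \<longrightarrow> ereal (\<Sum>l\<in>{i+1..<j}. T' (tau AT P l)) \<le> U i j - L i j"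
    proof (intro allI impI)
      fix i j assume "i < j \<and> j \<le> m + 1"
      then have ij: "i < j" "j \<le> m + 1" by auto
      have "ereal (C (\<lambda>_. 0) (st i) (en j) + (\<Sum>l\<in>{i+1..<j}. T' (tau AT P l))) \<le> U i j"
        using G[OF T' ij] C_decomp[OF ij, of T'] by simp
      then show "ereal (\<Sum>l\<in>{i+1..<j}. T' (tau AT P l)) \<le> U i j - L i j"
        using L_eq[OF ij] ereal_aux3 by simp
    qed
    show ?thesis using g.C2[OF nn H] tk_eq by simp
  qed
  show ?thesis using tv cons Ttau tk_eq opt by simp
qed

end

theorem corollary1:
  fixes V :: "'v set" and A AT AU :: "'e set" and src tgt :: "'e \<Rightarrow> 'v"
    and c d :: "'e \<Rightarrow> nat" and s t :: 'v and P :: "'e list"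
  assumes "finite A" and "A = AT \<union> AU" and "AT \<inter> AU = {}"
    and "\<forall>e\<in>A. src e \<in> V \<and> tgt e \<in> V" and "s \<in> V" and "t \<in> V"
    and "\<exists>Q. is_path src tgt AU s Q t"
    and "valid_path src tgt AT AU c d s t P"
  shows "toll_vector AT (opt_toll src tgt AT AU c d s t P)
    \<and> consistent src tgt AT AU c d s t P (opt_toll src tgt AT AU c d s t P)
    \<and> (\<forall>k\<in>{1..num_tolls AT P}.
          opt_toll src tgt AT AU c d s t P (tau AT P k) = tk src tgt AT AU c d s t P k)
    \<and> (\<forall>T'. toll_vector AT T' \<and> consistent src tgt AT AU c d s t P T' \<longrightarrow>
          (\<Sum>k=1..num_tolls AT P. T' (tau AT P k))
            \<le> (\<Sum>k=1..num_tolls AT P. tk src tgt AT AU c d s t P k))"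
proof -
  interpret tollpath src tgt AT AU c d s t P using assms(3,7,8) by unfold_locales
  show ?thesis by (rule main)
qed

end
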